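(* Let $\mathcal{A}_q$ be a contractive Banach $q$-plane generated by $x,y$. The following are equivalent: (i) $\mathcal{I}_{xy}\subseteq\operatorname{Rad}\mathcal{A}_q$; (ii) $\operatorname{Rad}\mathcal{A}_q=Q(\mathcal{A}_q)$; (iii) $\mathcal{A}_q/\operatorname{Rad}\mathcal{A}_q$ is commutative.
   Context: Fix $q\in\mathbb{C}$ with $0<|q|<1$. A contractive Banach $q$-plane is a unital Banach algebra $\mathcal{A}_q$ containing elements $x,y$ with $xy=q^{-1}yx$ such that the unital subalgebra $A_q$ generated by $x,y$ is dense. $\mathcal{I}_{xy}$ is the norm closure in $\mathcal{A}_q$ of the two-sided ideal of $A_q$ generated by $xy$. $\operatorname{Rad}$ denotes the Jacobson radical and $Q(\mathcal{A}_q)$ the set of quasinilpotent elements (elements with spectrum $\{0\}$). *)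

theory Defs
  imports "HOL-Analysis.Analysis"
begin

text \<open>The library has no complex normed vector spaces; we add complex scalar
multiplication on top of a real unital Banach algebra (norm 1 = 1, submultiplicative
norm, complete), compatible with the real structure and the multiplication.\<close>

class complex_banach_algebra_1 = real_normed_algebra_1 + banach +
  fixes scaleC :: "complex \<Rightarrow> 'a \<Rightarrow> 'a"
  assumes scaleC_add_right: "scaleC c (a + b) = scaleC c a + scaleC c b"
    and scaleC_add_left: "scaleC (c + d) a = scaleC c a + scaleC d a"
    and scaleC_scaleC: "scaleC c (scaleC d a) = scaleC (c * d) a"
    and scaleC_one: "scaleC 1 a = a"
    and scaleC_of_real: "scaleC (complex_of_real r) a = scaleR r a"
    and norm_scaleC: "norm (scaleC c a) = cmod c * norm a"
    and mult_scaleC_left: "scaleC c a * b = scaleC c (a * b)"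
    and mult_scaleC_right: "a * scaleC c b = scaleC c (a * b)"

definition invertible_el :: "'a::ring_1 \<Rightarrow> bool" where
  "invertible_el a \<longleftrightarrow> (\<exists>b. a * b = 1 \<and> b * a = 1)"

definition spectrum_el :: "'a::complex_banach_algebra_1 \<Rightarrow> complex set" where
  "spectrum_el a = {z. \<not> invertible_el (scaleC z 1 - a)}"

definition quasinilpotents :: "'a::complex_banach_algebra_1 set" where
  "quasinilpotents = {a. spectrum_el a = {0}}"

definition left_ideal :: "'a::complex_banach_algebra_1 set \<Rightarrow> bool" where
  "left_ideal L \<longleftrightarrow> 0 \<in> L \<and> (\<forall>a\<in>L. \<forall>b\<in>L. a + b \<in> L)
     \<and> (\<forall>c. \<forall>a\<in>L. scaleC c a \<in> L) \<and> (\<forall>r. \<forall>a\<in>L. r * a \<in> L)"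

definition maximal_left_ideal :: "'a::complex_banach_algebra_1 set \<Rightarrow> bool" where
  "maximal_left_ideal L \<longleftrightarrow> left_ideal L \<and> L \<noteq> UNIV \<and>
     (\<forall>M. left_ideal M \<and> L \<subseteq> M \<and> M \<noteq> UNIV \<longrightarrow> M = L)"

definition jacobson_radical :: "'a::complex_banach_algebra_1 set" where
  "jacobson_radical = \<Inter> {L. maximal_left_ideal L}"

inductive_set subalg_gen :: "'a::complex_banach_algebra_1 \<Rightarrow> 'a \<Rightarrow> 'a set"
  for x y :: 'a where
    one: "1 \<in> subalg_gen x y"
  | gen_x: "x \<in> subalg_gen x y"
  | gen_y: "y \<in> subalg_gen x y"
  | add: "a \<in> subalg_gen x y \<Longrightarrow> b \<in> subalg_gen x y \<Longrightarrow> a + b \<in> subalg_gen x y"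
  | scale: "a \<in> subalg_gen x y \<Longrightarrow> scaleC c a \<in> subalg_gen x y"
  | mult: "a \<in> subalg_gen x y \<Longrightarrow> b \<in> subalg_gen x y \<Longrightarrow> a * b \<in> subalg_gen x y"

inductive_set ideal_gen :: "'a::complex_banach_algebra_1 set \<Rightarrow> 'a \<Rightarrow> 'a set"
  for S :: "'a set" and z :: 'a where
    gen: "z \<in> ideal_gen S z"
  | zero: "0 \<in> ideal_gen S z"
  | add: "a \<in> ideal_gen S z \<Longrightarrow> b \<in> ideal_gen S z \<Longrightarrow> a + b \<in> ideal_gen S z"
  | scale: "a \<in> ideal_gen S z \<Longrightarrow> scaleC c a \<in> ideal_gen S z"
  | mult_left: "s \<in> S \<Longrightarrow> a \<in> ideal_gen S z \<Longrightarrow> s * a \<in> ideal_gen S z"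
  | mult_right: "s \<in> S \<Longrightarrow> a \<in> ideal_gen S z \<Longrightarrow> a * s \<in> ideal_gen S z"

definition banach_q_plane :: "complex \<Rightarrow> 'a::complex_banach_algebra_1 \<Rightarrow> 'a \<Rightarrow> bool" where
  "banach_q_plane q x y \<longleftrightarrow> x * y = scaleC (inverse q) (y * x)
     \<and> closure (subalg_gen x y) = UNIV"

definition I_xy :: "'a::complex_banach_algebra_1 \<Rightarrow> 'a \<Rightarrow> 'a set" where
  "I_xy x y = closure (ideal_gen (subalg_gen x y) (x * y))"

end

theory Submission
  imports Defs
begin


interpretation cv: vector_space "scaleC :: complex \<Rightarrow> 'a::complex_banach_algebra_1 \<Rightarrow> 'a"
  by unfold_locales (auto simp: scaleC_add_right scaleC_add_left scaleC_scaleC scaleC_one)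

lemma scaleC_real_comm: "scaleC c (scaleR r a) = scaleR r (scaleC c (a::'a::complex_banach_algebra_1))"
  by (metis scaleC_of_real scaleC_scaleC mult.commute)

lemma bounded_linear_scaleC: "bounded_linear (scaleC c :: 'a::complex_banach_algebra_1 \<Rightarrow> 'a)"
  by (rule bounded_linear_intro[where K="cmod c"])
     (auto simp: scaleC_add_right scaleC_real_comm norm_scaleC mult.commute)

lemma scaleC_diff_left: "scaleC c a - scaleC d a = scaleC (c - d) (a::'a::complex_banach_algebra_1)"
  by (simp add: cv.scale_left_diff_distrib)

lemma norm_scaleC_diff_left: "norm (scaleC c a - scaleC d a) = cmod (c - d) * norm (a::'a::complex_banach_algebra_1)"
  by (simp add: scaleC_diff_left norm_scaleC)

lemma scaleC_power: "(scaleC c b) ^ n = scaleC (c ^ n) ((b::'a::complex_banach_algebra_1) ^ n)"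
  by (induction n) (auto simp: scaleC_one mult_scaleC_left mult_scaleC_right scaleC_scaleC mult.commute)

lemma scaleC_mult_both: "scaleC c a * scaleC d b = scaleC (c*d) ((a::'a::complex_banach_algebra_1) * b)"
  by (simp add: mult_scaleC_left mult_scaleC_right scaleC_scaleC)

lemma continuous_scaleC_scalar: "continuous_on UNIV (\<lambda>c. scaleC c (a::'a::complex_banach_algebra_1))"
  unfolding continuous_on_iff
proof (intro ballI allI impI)
  fix c :: complex and e :: real assume "e > 0"
  show "\<exists>d>0. \<forall>x'\<in>UNIV. dist x' c < d \<longrightarrow> dist (scaleC x' a) (scaleC c a) < e"
  proof (intro exI[of _ "e / (norm a + 1)"] conjI ballI impI)
    show "e / (norm a + 1) > 0" using \<open>e>0\<close> by (simp add: add_nonneg_pos)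
    fix x' assume "x' \<in> UNIV" "dist x' c < e / (norm a + 1)"
    then have h: "cmod (x' - c) * (norm a + 1) < e"
      by (simp add: dist_norm pos_less_divide_eq add_nonneg_pos)
    have "dist (scaleC x' a) (scaleC c a) = cmod (x' - c) * norm a"
      by (simp add: dist_norm norm_scaleC_diff_left)
    also have "\<dots> \<le> cmod (x' - c) * (norm a + 1)" by (simp add: mult_left_mono)
    finally show "dist (scaleC x' a) (scaleC c a) < e" using h by linarith
  qed
qed

definition inv_el :: "'a::ring_1 \<Rightarrow> 'a" where
  "inv_el a = (SOME b. a * b = 1 \<and> b * a = 1)"

lemma inv_el: "invertible_el a \<Longrightarrow> a * inv_el a = 1 \<and> inv_el a * a = 1"
  unfolding invertible_el_def inv_el_def by (rule someI_ex)

lemma inv_el_unique: "a * b = 1 \<Longrightarrow> b * a = (1::'a::ring_1) \<Longrightarrow> inv_el a = b"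
proof -
  assume ab: "a * b = 1" "b * a = 1"
  then have "invertible_el a" unfolding invertible_el_def by blast
  from inv_el[OF this] have "inv_el a * a = 1" "a * inv_el a = 1" by auto
  then show ?thesis by (metis ab(1) mult.assoc mult_1_left mult_1_right)
qed

lemma invertible_el_I: "a * b = 1 \<Longrightarrow> b * a = 1 \<Longrightarrow> invertible_el a"
  unfolding invertible_el_def by blast

lemma invertible_one: "invertible_el (1::'a::ring_1)"
  by (rule invertible_el_I[of _ 1]) auto

lemma left_inv_right_inv: "b * a = 1 \<Longrightarrow> a * c = 1 \<Longrightarrow> b = (c::'a::ring_1)"
  by (metis mult.assoc mult_1_left mult_1_right)

lemma geom_times: "(1 - c) * (\<Sum>k<n. c ^ k) = 1 - c ^ n \<and> (\<Sum>k<n. c ^ k) * (1 - c) = 1 - (c::'a::ring_1) ^ n"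
proof (induction n)
  case 0 then show ?case by simp
next
  case (Suc n)
  have e1: "(1 - c) * c ^ n = c ^ n - c ^ Suc n" by (simp add: algebra_simps)
  have e2: "c ^ n * (1 - c) = c ^ n - c ^ Suc n" by (simp add: algebra_simps power_commutes)
  show ?case using Suc by (simp add: distrib_left distrib_right e1 e2)
qed

lemma neumann:
  assumes "summable (\<lambda>n. norm ((c::'a::complex_banach_algebra_1) ^ n))"
  shows "invertible_el (1 - c) \<and> inv_el (1 - c) = (\<Sum>n. c ^ n)"
proof -
  have s: "summable (\<lambda>n. c ^ n)" using assms by (rule summable_norm_cancel)
  have z: "(\<lambda>n. c ^ n) \<longlonglongrightarrow> 0" using summable_LIMSEQ_zero[OF s] .
  let ?S = "\<Sum>n. c ^ n"
  have ps: "(\<lambda>n. \<Sum>k<n. c ^ k) \<longlonglongrightarrow> ?S" using s by (simp add: summable_LIMSEQ)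
  have l1: "(\<lambda>n. (1 - c) * (\<Sum>k<n. c ^ k)) \<longlonglongrightarrow> (1 - c) * ?S"
    by (intro tendsto_mult tendsto_const ps)
  have l2: "(\<lambda>n. (\<Sum>k<n. c ^ k) * (1 - c)) \<longlonglongrightarrow> ?S * (1 - c)"
    by (intro tendsto_mult tendsto_const ps)
  have l3: "(\<lambda>n. 1 - c ^ n) \<longlonglongrightarrow> 1 - 0"
    by (intro tendsto_diff tendsto_const z)
  have l1': "(\<lambda>n. (1 - c) * (\<Sum>k<n. c ^ k)) \<longlonglongrightarrow> 1"
    using l3 geom_times[of c] by simp
  have l2': "(\<lambda>n. (\<Sum>k<n. c ^ k) * (1 - c)) \<longlonglongrightarrow> 1"
    using l3 geom_times[of c] by simp
  have "(1 - c) * ?S = 1" using LIMSEQ_unique[OF l1 l1'] .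
  moreover have "?S * (1 - c) = 1" using LIMSEQ_unique[OF l2 l2'] .
  ultimately show ?thesis using invertible_el_I inv_el_unique by blast
qed

lemma neumann_small:
  assumes "norm (z::'a::complex_banach_algebra_1) \<le> 1/2"
  shows "invertible_el (1 - z) \<and> norm (inv_el (1 - z) - 1) \<le> 2 * norm z"
proof -
  have g: "summable (\<lambda>n. norm z ^ n)" using assms by (intro summable_geometric) simp
  have le: "norm (z ^ n) \<le> norm z ^ n" for n by (rule norm_power_ineq)
  have sn: "summable (\<lambda>n. norm (z ^ n))"
    by (rule summable_comparison_test[OF _ g]) (auto simp: le)
  from neumann[OF sn] have inv: "invertible_el (1 - z)" and eq: "inv_el (1 - z) = (\<Sum>n. z ^ n)" by auto
  have "norm (\<Sum>n. z ^ n) \<le> (\<Sum>n. norm (z ^ n))" by (rule summable_norm[OF sn])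
  also have "\<dots> \<le> (\<Sum>n. norm z ^ n)" by (rule suminf_le[OF le sn g])
  also have "\<dots> = 1 / (1 - norm z)" using assms by (intro suminf_geometric) simp
  also have "\<dots> \<le> 2" using assms by (simp add: field_simps)
  finally have nb: "norm (inv_el (1 - z)) \<le> 2" using eq by simp
  have "(1 - z) * inv_el (1 - z) = 1" using inv_el[OF inv] by simp
  then have "inv_el (1 - z) - 1 = z * inv_el (1 - z)" by (simp add: algebra_simps)
  then have "norm (inv_el (1 - z) - 1) \<le> norm z * norm (inv_el (1 - z))"
    by (simp add: norm_mult_ineq)
  also have "\<dots> \<le> norm z * 2" using nb by (simp add: mult_left_mono)
  finally show ?thesis using inv by simp
qed

lemma inv_cont:
  assumes u: "invertible_el (u::'a::complex_banach_algebra_1)"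
    and small: "norm (w - u) * norm (inv_el u) \<le> 1/2"
  shows "invertible_el w \<and> norm (inv_el w - inv_el u) \<le> 2 * norm (inv_el u) ^ 2 * norm (w - u)"
proof -
  let ?v = "inv_el u"
  have uv: "u * ?v = 1" "?v * u = 1" using inv_el[OF u] by auto
  define z where "z = ?v * (u - w)"
  have nz: "norm z \<le> 1/2"
    using small norm_mult_ineq[of ?v "u - w"] by (simp add: z_def norm_minus_commute mult.commute)
  from neumann_small[OF nz] have i1: "invertible_el (1 - z)"
    and b1: "norm (inv_el (1 - z) - 1) \<le> 2 * norm z" by auto
  have uz: "u * z = u - w" unfolding z_def by (simp add: mult.assoc[symmetric] uv(1))
  have w_eq: "w = u * (1 - z)" using uz by (simp add: right_diff_distrib)
  have vw: "?v * w = 1 - z"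
  proof -
    have "?v * w = ?v * (u * (1 - z))" using w_eq by simp
    also have "\<dots> = (?v * u) * (1 - z)" by (simp add: mult.assoc)
    finally show ?thesis using uv(2) by simp
  qed
  let ?W = "inv_el (1 - z) * ?v"
  have a1: "w * ?W = 1"
  proof -
    have "w * ?W = u * ((1 - z) * inv_el (1 - z)) * ?v" by (simp add: w_eq mult.assoc)
    also have "\<dots> = 1" using inv_el[OF i1] uv by simp
    finally show ?thesis .
  qed
  have a2: "?W * w = 1"
  proof -
    have "?W * w = inv_el (1 - z) * (?v * w)" by (simp add: mult.assoc)
    also have "\<dots> = 1" using inv_el[OF i1] vw by simp
    finally show ?thesis .
  qed
  have iw: "invertible_el w" using a1 a2 by (rule invertible_el_I)
  have eqW: "inv_el w = ?W" using inv_el_unique[OF a1 a2] .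
  have "inv_el w - ?v = (inv_el (1 - z) - 1) * ?v" by (simp add: eqW algebra_simps)
  then have "norm (inv_el w - ?v) \<le> norm (inv_el (1 - z) - 1) * norm ?v"
    by (simp add: norm_mult_ineq)
  also have "\<dots> \<le> 2 * norm z * norm ?v" using b1 by (simp add: mult_right_mono)
  also have "\<dots> \<le> 2 * (norm ?v * norm (w - u)) * norm ?v"
    using norm_mult_ineq[of ?v "u - w"]
    by (intro mult_right_mono mult_left_mono) (auto simp: z_def norm_minus_commute)
  also have "\<dots> = 2 * norm ?v ^ 2 * norm (w - u)" by (simp add: power2_eq_square)
  finally show ?thesis using iw by simp
qed



section \<open>Left ideals\<close>

lemma li_0: "left_ideal L \<Longrightarrow> 0 \<in> L" unfolding left_ideal_def by auto
lemma li_add: "left_ideal L \<Longrightarrow> a \<in> L \<Longrightarrow> b \<in> L \<Longrightarrow> a + b \<in> L" unfolding left_ideal_def by auto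
lemma li_scale: "left_ideal L \<Longrightarrow> a \<in> L \<Longrightarrow> scaleC c a \<in> L" unfolding left_ideal_def by auto
lemma li_mult: "left_ideal L \<Longrightarrow> a \<in> L \<Longrightarrow> r * a \<in> L" unfolding left_ideal_def by auto
lemma li_uminus: "left_ideal L \<Longrightarrow> a \<in> L \<Longrightarrow> - a \<in> L"
  using li_scale[of L a "-1"] by (simp add: cv.scale_minus_left scaleC_one)
lemma li_diff: "left_ideal L \<Longrightarrow> a \<in> L \<Longrightarrow> b \<in> L \<Longrightarrow> a - b \<in> L"
  using li_add li_uminus by (metis diff_conv_add_uminus)
lemma li_sum: "left_ideal L \<Longrightarrow> (\<And>i. i \<in> S \<Longrightarrow> f i \<in> L) \<Longrightarrow> sum f S \<in> L"
  by (induction S rule: infinite_finite_induct) (auto intro: li_0 li_add)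
lemma li_one: "left_ideal L \<Longrightarrow> 1 \<in> L \<Longrightarrow> L = UNIV"
  using li_mult[of L 1] by force

lemma closure_seqI: "(\<forall>n. s n \<in> L) \<Longrightarrow> s \<longlonglongrightarrow> a \<Longrightarrow> (a::'a::first_countable_topology) \<in> closure L"
  unfolding closure_sequential by blast

lemma left_ideal_Inter: "(\<And>L. L \<in> F \<Longrightarrow> left_ideal L) \<Longrightarrow> left_ideal (\<Inter> F)"
  unfolding left_ideal_def by auto

lemma closure_left_ideal:
  fixes L :: "'a::complex_banach_algebra_1 set"
  assumes L: "left_ideal L" shows "left_ideal (closure L)"
  unfolding left_ideal_def
proof (intro conjI ballI allI)
  show "0 \<in> closure L" using li_0[OF L] closure_subset by blast
next
  fix a b assume "a \<in> closure L" "b \<in> closure L"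
  then obtain s t where s: "\<forall>n. s n \<in> L" "s \<longlonglongrightarrow> a" and t: "\<forall>n. t n \<in> L" "t \<longlonglongrightarrow> b"
    unfolding closure_sequential by blast
  have "\<forall>n. s n + t n \<in> L" using s t li_add[OF L] by blast
  moreover have "(\<lambda>n. s n + t n) \<longlonglongrightarrow> a + b" by (intro tendsto_add s t)
  ultimately show "a + b \<in> closure L" by (rule closure_seqI)
next
  fix c :: complex and a assume "a \<in> closure L"
  then obtain s where s: "\<forall>n. s n \<in> L" "s \<longlonglongrightarrow> a" unfolding closure_sequential by blast
  have "\<forall>n. scaleC c (s n) \<in> L" using s li_scale[OF L] by blast
  moreover have "(\<lambda>n. scaleC c (s n)) \<longlonglongrightarrow> scaleC c a"
    using bounded_linear.tendsto[OF bounded_linear_scaleC s(2)] .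
  ultimately show "scaleC c a \<in> closure L" by (rule closure_seqI)
next
  fix r a assume "a \<in> closure L"
  then obtain s where s: "\<forall>n. s n \<in> L" "s \<longlonglongrightarrow> a" unfolding closure_sequential by blast
  have "\<forall>n. r * s n \<in> L" using s li_mult[OF L] by blast
  moreover have "(\<lambda>n. r * s n) \<longlonglongrightarrow> r * a" by (intro tendsto_mult tendsto_const s)
  ultimately show "r * a \<in> closure L" by (rule closure_seqI)
qed

lemma one_not_in_closure:
  fixes L :: "'a::complex_banach_algebra_1 set"
  assumes L: "left_ideal L" and ne: "L \<noteq> UNIV" shows "1 \<notin> closure L"
proof
  assume "1 \<in> closure L"
  then obtain l where l: "l \<in> L" "dist l 1 < 1/2"
    unfolding closure_approachable by (metis divide_pos_pos zero_less_numeral zero_less_one)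
  let ?z = "1 - l"
  have "norm ?z \<le> 1/2" using l(2) by (simp add: dist_norm norm_minus_commute)
  from neumann_small[OF this] have "invertible_el l" by simp
  then have "inv_el l * l = 1" using inv_el by blast
  then have "1 \<in> L" using li_mult[OF L l(1), of "inv_el l"] by simp
  then show False using li_one[OF L] ne by simp
qed

lemma maximal_closed:
  fixes L :: "'a::complex_banach_algebra_1 set"
  assumes "maximal_left_ideal L" shows "closed L"
proof -
  have L: "left_ideal L" "L \<noteq> UNIV" and mx: "\<And>M. left_ideal M \<Longrightarrow> L \<subseteq> M \<Longrightarrow> M \<noteq> UNIV \<Longrightarrow> M = L"
    using assms unfolding maximal_left_ideal_def by auto
  have "closure L \<noteq> UNIV" using one_not_in_closure[OF L] by auto
  then have "closure L = L" using mx[OF closure_left_ideal[OF L(1)] closure_subset] by simp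
  then show ?thesis by (metis closed_closure)
qed

lemma exists_maximal:
  fixes J :: "'a::complex_banach_algebra_1 set"
  assumes J: "left_ideal J" and nJ: "1 \<notin> J"
  shows "\<exists>L. maximal_left_ideal L \<and> J \<subseteq> L"
proof -
  let ?A = "{M. left_ideal M \<and> J \<subseteq> M \<and> 1 \<notin> M}"
  have "\<exists>M\<in>?A. \<forall>X\<in>?A. M \<subseteq> X \<longrightarrow> X = M"
  proof (rule subset_Zorn_nonempty)
    show "?A \<noteq> {}" using J nJ by blast
  next
    fix C assume C: "C \<noteq> {}" "subset.chain ?A C"
    then have sub: "C \<subseteq> ?A" and ch: "\<forall>X\<in>C. \<forall>Y\<in>C. X \<subseteq> Y \<or> Y \<subseteq> X"
      unfolding subset_chain_def by auto
    have li: "left_ideal (\<Union>C)"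
      unfolding left_ideal_def
    proof (intro conjI ballI allI)
      show "0 \<in> \<Union>C" using C(1) sub li_0 by blast
    next
      fix a b assume "a \<in> \<Union>C" "b \<in> \<Union>C"
      then obtain X Y where "X \<in> C" "Y \<in> C" "a \<in> X" "b \<in> Y" by blast
      with ch have "(a \<in> Y \<and> b \<in> Y \<and> Y \<in> C) \<or> (a \<in> X \<and> b \<in> X \<and> X \<in> C)" by blast
      then show "a + b \<in> \<Union>C" using sub li_add by blast
    next
      fix c a assume "a \<in> \<Union>C" then show "scaleC c a \<in> \<Union>C" using sub li_scale by blast
    next
      fix r a assume "a \<in> \<Union>C" then show "r * a \<in> \<Union>C" using sub li_mult by blast
    qed
    show "\<Union>C \<in> ?A" using li C(1) sub by blast
  qed
  then obtain L where L: "L \<in> ?A" and mx: "\<forall>X\<in>?A. L \<subseteq> X \<longrightarrow> X = L" by blast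
  have "maximal_left_ideal L"
    unfolding maximal_left_ideal_def
  proof (intro conjI allI impI)
    show "left_ideal L" using L by simp
    show "L \<noteq> UNIV" using L by auto
    fix M assume M: "left_ideal M \<and> L \<subseteq> M \<and> M \<noteq> UNIV"
    then have "1 \<notin> M" using li_one by blast
    then show "M = L" using M L mx by blast
  qed
  then show ?thesis using L by blast
qed

section \<open>Jacobson radical\<close>

lemma rad_left_ideal: "left_ideal (jacobson_radical :: 'a::complex_banach_algebra_1 set)"
  unfolding jacobson_radical_def by (rule left_ideal_Inter) (auto simp: maximal_left_ideal_def)

lemma rad_closed: "closed (jacobson_radical :: 'a::complex_banach_algebra_1 set)"
  unfolding jacobson_radical_def by (rule closed_Inter) (auto intro: maximal_closed)

lemma rad_char:
  "(r::'a::complex_banach_algebra_1) \<in> jacobson_radical \<longleftrightarrow> (\<forall>b. \<exists>u. u * (1 - b * r) = 1)"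
proof
  assume r: "r \<in> jacobson_radical"
  show "\<forall>b. \<exists>u. u * (1 - b * r) = 1"
  proof (rule ccontr)
    assume "\<not> ?thesis"
    then obtain b where nb: "\<And>u. u * (1 - b * r) \<noteq> 1" by blast
    let ?J = "{s * (1 - b * r) | s. True}"
    have J: "left_ideal ?J"
      unfolding left_ideal_def
    proof (intro conjI ballI allI)
      show "0 \<in> ?J" by (metis (mono_tags, lifting) mem_Collect_eq mult_zero_left)
    next
      fix x y assume "x \<in> ?J" "y \<in> ?J"
      then show "x + y \<in> ?J" by (auto simp: distrib_right[symmetric])
    next
      fix c x assume "x \<in> ?J" then show "scaleC c x \<in> ?J" by (auto simp: mult_scaleC_left[symmetric])
    next
      fix t x assume "x \<in> ?J" then show "t * x \<in> ?J" by (auto simp: mult.assoc[symmetric])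
    qed
    have "1 \<notin> ?J" using nb by auto
    from exists_maximal[OF J this] obtain L where L: "maximal_left_ideal L" "?J \<subseteq> L" by blast
    have Ll: "left_ideal L" using L(1) unfolding maximal_left_ideal_def by auto
    have "r \<in> L" using r L(1) unfolding jacobson_radical_def by blast
    then have "b * r \<in> L" by (rule li_mult[OF Ll])
    moreover have "1 - b * r \<in> L" using L(2) by (metis (mono_tags, lifting) mem_Collect_eq mult_1_left subsetD)
    ultimately have "1 \<in> L" using li_add[OF Ll] by fastforce
    then show False using li_one[OF Ll] L(1) unfolding maximal_left_ideal_def by auto
  qed
next
  assume H: "\<forall>b. \<exists>u. u * (1 - b * r) = 1"
  show "r \<in> jacobson_radical"
    unfolding jacobson_radical_def
  proof
    fix L :: "'a set" assume "L \<in> {L. maximal_left_ideal L}"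
    then have Ll: "left_ideal L" and ne: "L \<noteq> UNIV"
      and mx: "\<And>M. left_ideal M \<Longrightarrow> L \<subseteq> M \<Longrightarrow> M \<noteq> UNIV \<Longrightarrow> M = L"
      unfolding maximal_left_ideal_def by auto
    show "r \<in> L"
    proof (rule ccontr)
      assume rL: "r \<notin> L"
      let ?M = "{l + s * r | l s. l \<in> L}"
      have M: "left_ideal ?M"
        unfolding left_ideal_def
      proof (intro conjI ballI allI)
        have "(0::'a) = 0 + 0 * r" by simp
        then show "0 \<in> ?M" using li_0[OF Ll] by blast
      next
        fix x y assume "x \<in> ?M" "y \<in> ?M"
        then obtain l1 s1 l2 s2 where "x = l1 + s1 * r" "y = l2 + s2 * r" "l1 \<in> L" "l2 \<in> L" by blast
        then have "x + y = (l1 + l2) + (s1 + s2) * r \<and> l1 + l2 \<in> L"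
          using li_add[OF Ll] by (simp add: algebra_simps)
        then show "x + y \<in> ?M" by blast
      next
        fix c x assume "x \<in> ?M"
        then obtain l s where "x = l + s * r" "l \<in> L" by blast
        then have "scaleC c x = scaleC c l + (scaleC c s) * r \<and> scaleC c l \<in> L"
          using li_scale[OF Ll] by (simp add: scaleC_add_right mult_scaleC_left)
        then show "scaleC c x \<in> ?M" by blast
      next
        fix t x assume "x \<in> ?M"
        then obtain l s where "x = l + s * r" "l \<in> L" by blast
        then have "t * x = t * l + (t * s) * r \<and> t * l \<in> L"
          using li_mult[OF Ll] by (simp add: distrib_left mult.assoc)
        then show "t * x \<in> ?M" by blast
      qed
      have LM: "L \<subseteq> ?M"
      proof
        fix l assume "l \<in> L"
        moreover have "l = l + 0 * r" by simp
        ultimately show "l \<in> ?M" by blast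
      qed
      have "r = 0 + 1 * r" by simp
      then have "r \<in> ?M" using li_0[OF Ll] by blast
      then have "?M \<noteq> L" using rL by blast
      then have "?M = UNIV" using mx[OF M LM] by blast
      then obtain l s where ls: "1 = l + s * r" "l \<in> L" by blast
      obtain u where u: "u * (1 - s * r) = 1" using H by blast
      have "1 - s * r = l" using ls(1) by (simp add: algebra_simps)
      then have "1 \<in> L" using u li_mult[OF Ll ls(2), of u] by simp
      then show False using li_one[OF Ll] ne by simp
    qed
  qed
qed

lemma rad_inv:
  assumes r: "(r::'a::complex_banach_algebra_1) \<in> jacobson_radical"
  shows "invertible_el (1 - r)"
proof -
  obtain u where u: "u * (1 - r) = 1" using r rad_char[of r] by (metis mult_1_left)
  have "u = 1 - (- u) * r" using u by (simp add: algebra_simps)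
  obtain v where v: "v * (1 - (- u) * r) = 1" using r rad_char[of r] by blast
  then have vu: "v * u = 1" using \<open>u = 1 - (- u) * r\<close> by simp
  have "v = 1 - r" using left_inv_right_inv[OF vu, of "1 - r"] u
    by (metis left_inv_right_inv mult.assoc mult_1_left vu)
  then show ?thesis using u vu invertible_el_I by (metis)
qed

lemma jacobson_trick:
  assumes "invertible_el (1 - b * a)" shows "invertible_el (1 - a * (b::'a::ring_1))"
proof -
  obtain u where u: "(1 - b * a) * u = 1" "u * (1 - b * a) = 1" using assms unfolding invertible_el_def by blast
  have e1: "(1 - a * b) * (1 + a * u * b) = 1 + a * ((1 - b * a) * u - 1) * b"
    by (simp add: algebra_simps)
  have e2: "(1 + a * u * b) * (1 - a * b) = 1 + a * (u * (1 - b * a) - 1) * b"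
    by (simp add: algebra_simps)
  show ?thesis using e1 e2 u by (intro invertible_el_I[of _ "1 + a * u * b"]) simp_all
qed

lemma rad_mult_left: "r \<in> jacobson_radical \<Longrightarrow> c * r \<in> (jacobson_radical :: 'a::complex_banach_algebra_1 set)"
  using li_mult[OF rad_left_ideal] .

lemma rad_mult_right:
  assumes r: "(r::'a::complex_banach_algebra_1) \<in> jacobson_radical"
  shows "r * c \<in> jacobson_radical"
  unfolding rad_char
proof
  fix b
  have "(c * b) * r \<in> jacobson_radical" using rad_mult_left[OF r] .
  then have "invertible_el (1 - c * (b * r))" using rad_inv by (simp add: mult.assoc)
  then have "invertible_el (1 - (b * r) * c)" by (rule jacobson_trick)
  then show "\<exists>u. u * (1 - b * (r * c)) = 1" unfolding invertible_el_def by (auto simp: mult.assoc)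
qed

lemma rad_add: "a \<in> jacobson_radical \<Longrightarrow> b \<in> jacobson_radical \<Longrightarrow> a + b \<in> (jacobson_radical :: 'a::complex_banach_algebra_1 set)"
  using li_add[OF rad_left_ideal] .
lemma rad_diff: "a \<in> jacobson_radical \<Longrightarrow> b \<in> jacobson_radical \<Longrightarrow> a - b \<in> (jacobson_radical :: 'a::complex_banach_algebra_1 set)"
  using li_diff[OF rad_left_ideal] .
lemma rad_uminus: "a \<in> jacobson_radical \<Longrightarrow> - a \<in> (jacobson_radical :: 'a::complex_banach_algebra_1 set)"
  using li_uminus[OF rad_left_ideal] .
lemma rad_scale: "a \<in> jacobson_radical \<Longrightarrow> scaleC c a \<in> (jacobson_radical :: 'a::complex_banach_algebra_1 set)"
  using li_scale[OF rad_left_ideal] .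
lemma rad_0: "0 \<in> (jacobson_radical :: 'a::complex_banach_algebra_1 set)"
  using li_0[OF rad_left_ideal] .
lemma rad_sum: "(\<And>i. i \<in> S \<Longrightarrow> f i \<in> jacobson_radical) \<Longrightarrow> sum f S \<in> (jacobson_radical :: 'a::complex_banach_algebra_1 set)"
  using li_sum[OF rad_left_ideal] .

lemma rad_not_one: "(1::'a::complex_banach_algebra_1) \<notin> jacobson_radical"
proof
  assume "(1::'a) \<in> jacobson_radical"
  then obtain u :: 'a where "u * (1 - 1 * 1) = 1" using rad_char by blast
  then show False by simp
qed

lemma invertible_scale:
  assumes "invertible_el (a::'a::complex_banach_algebra_1)" "c \<noteq> 0"
  shows "invertible_el (scaleC c a)"
  using inv_el[OF assms(1)] assms(2)
  by (intro invertible_el_I[of _ "scaleC (inverse c) (inv_el a)"])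
     (auto simp: scaleC_mult_both scaleC_one)

lemma invertible_uminus: "invertible_el (- a) \<Longrightarrow> invertible_el (a::'a::ring_1)"
proof -
  assume "invertible_el (- a)"
  then obtain b where "(- a) * b = 1" "b * (- a) = 1" unfolding invertible_el_def by blast
  then have "a * (- b) = 1" "(- b) * a = 1" by simp_all
  then show ?thesis by (rule invertible_el_I)
qed

lemma spec_shift: "(z::complex) \<noteq> 0 \<Longrightarrow> scaleC z 1 - a = scaleC z (1 - scaleC (inverse z) (a::'a::complex_banach_algebra_1))"
  by (simp add: cv.scale_right_diff_distrib scaleC_scaleC scaleC_one)

lemma invertible_from_shift:
  assumes "\<And>\<mu>. invertible_el (1 - scaleC \<mu> a)" "\<not> invertible_el (a::'a::complex_banach_algebra_1)"
  shows "a \<in> quasinilpotents"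
proof -
  have "spectrum_el a = {0}"
  proof (intro set_eqI iffI)
    fix z :: complex assume "z \<in> spectrum_el a"
    then have ni: "\<not> invertible_el (scaleC z 1 - a)" unfolding spectrum_el_def by simp
    show "z \<in> {0}"
    proof (rule ccontr)
      assume "z \<notin> {0}" then have "z \<noteq> 0" by simp
      then have "invertible_el (scaleC z 1 - a)"
        using spec_shift invertible_scale assms(1) by metis
      then show False using ni by simp
    qed
  next
    fix z :: complex assume "z \<in> {0}" then show "z \<in> spectrum_el a"
      using assms(2) invertible_uminus by (auto simp: spectrum_el_def cv.scale_zero_left)
  qed
  then show ?thesis unfolding quasinilpotents_def by simp
qed

lemma quasinil_shift:
  assumes "(a::'a::complex_banach_algebra_1) \<in> quasinilpotents" shows "invertible_el (1 - scaleC \<mu> a)"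
proof (cases "\<mu> = 0")
  case True then show ?thesis by (simp add: cv.scale_zero_left invertible_one)
next
  case False
  have "inverse \<mu> \<notin> spectrum_el a" using assms False unfolding quasinilpotents_def by simp
  then have i: "invertible_el (scaleC (inverse \<mu>) 1 - a)" unfolding spectrum_el_def by simp
  have "scaleC (inverse \<mu>) 1 - a = scaleC (inverse \<mu>) (1 - scaleC \<mu> a)"
    using spec_shift[of "inverse \<mu>" a] False by simp
  then have "invertible_el (scaleC \<mu> (scaleC (inverse \<mu>) 1 - a))" using i invertible_scale False by metis
  then show ?thesis using False by (simp add: \<open>scaleC (inverse \<mu>) 1 - a = _\<close> scaleC_scaleC scaleC_one)
qed

lemma rad_sub_quasinil: "jacobson_radical \<subseteq> (quasinilpotents :: 'a::complex_banach_algebra_1 set)"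
proof
  fix r :: 'a assume r: "r \<in> jacobson_radical"
  have "invertible_el (1 - scaleC \<mu> r)" for \<mu> using rad_inv rad_scale[OF r] by blast
  moreover have "\<not> invertible_el r"
  proof
    assume "invertible_el r"
    then have "inv_el r * r = 1" using inv_el by blast
    then show False using rad_mult_left[OF r, of "inv_el r"] rad_not_one[where 'a='a] by simp
  qed
  ultimately show "r \<in> quasinilpotents" by (rule invertible_from_shift)
qed



section \<open>Roots of unity\<close>

definition omg :: "nat \<Rightarrow> complex" where
  "omg n = exp (2 * of_real pi * \<i> / of_nat n)"

lemma omg_pow: "omg n ^ j = exp (2 * of_real pi * \<i> * of_nat j / of_nat n)"
  unfolding omg_def by (simp flip: exp_of_nat_mult add: field_simps)

lemma omg_pow_n: "n > 0 \<Longrightarrow> omg n ^ n = 1"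
  unfolding omg_pow by (simp add: exp_eq_1)

lemma norm_omg_pow: "cmod (omg n ^ j) = 1"
  unfolding omg_pow by (simp add: norm_exp_eq_Re)

lemma omg_pow_ne1:
  assumes "0 < j" "j < n" shows "omg n ^ j \<noteq> 1"
proof
  assume "omg n ^ j = 1"
  then obtain m :: int where m: "2 * pi * real j / real n = of_int (2 * m) * pi"
    unfolding omg_pow exp_eq_1 by auto
  have np: "real n > 0" using assms by simp
  from m have "real j = of_int m * real n" using np pi_gt_zero by (simp add: field_simps)
  then have "real j / real n = of_int m" using np by simp
  moreover have "0 < real j / real n" "real j / real n < 1" using assms by auto
  ultimately show False by (metis of_int_0_less_iff of_int_less_1_iff zero_less_one_class.zero_le_one not_le int_one_le_iff_zero_less)
qed

lemma root_sum:
  assumes "j < n" shows "(\<Sum>k<n. (omg n ^ j) ^ k) = (if j = 0 then of_nat n else 0)"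
proof (cases "j = 0")
  case True then show ?thesis by simp
next
  case False
  then have "omg n ^ j \<noteq> 1" using assms omg_pow_ne1 by simp
  moreover have "(omg n ^ j) ^ n = 1"
    using omg_pow_n[of n] assms by (simp flip: power_mult add: mult.commute[of j] power_mult)
  ultimately show ?thesis using False by (simp add: sum_gp_strict)
qed

section \<open>Rickart's identity\<close>

lemma scaleC_sum_left': "scaleC (sum f S) a = (\<Sum>i\<in>S. scaleC (f i) (a::'a::complex_banach_algebra_1))"
  by (rule cv.scale_sum_left)

lemma rickart_identity:
  fixes b :: "'a::complex_banach_algebra_1"
  assumes n: "n > 0" and inv: "\<And>k. k < n \<Longrightarrow> invertible_el (1 - scaleC (omg n ^ k) b)"
  shows "invertible_el (1 - b ^ n) \<and>
    inv_el (1 - b ^ n) = scaleC (1 / of_nat n) (\<Sum>k<n. inv_el (1 - scaleC (omg n ^ k) b))"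
proof -
  define d where "d k = scaleC (omg n ^ k) b" for k
  define P where "P k = (\<Sum>j<n. d k ^ j)" for k
  have dn: "d k ^ n = b ^ n" for k
  proof -
    have "(omg n ^ k) ^ n = 1" using omg_pow_n[OF n] by (simp flip: power_mult add: mult.commute[of k] power_mult)
    then show ?thesis by (simp add: d_def scaleC_power scaleC_one)
  qed
  have g1: "(1 - d k) * P k = 1 - b ^ n" and g2: "P k * (1 - d k) = 1 - b ^ n" for k
    using geom_times[of "d k" n] dn by (auto simp: P_def)
  let ?S = "\<Sum>k<n. inv_el (1 - d k)"
  have iv: "k < n \<Longrightarrow> (1 - d k) * inv_el (1 - d k) = 1 \<and> inv_el (1 - d k) * (1 - d k) = 1" for k
    using inv_el[OF inv] by (simp add: d_def)
  have h1: "(1 - b ^ n) * inv_el (1 - d k) = P k" if "k < n" for k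
  proof -
    have "(1 - b ^ n) * inv_el (1 - d k) = P k * ((1 - d k) * inv_el (1 - d k))"
      by (simp add: g2[of k, symmetric] mult.assoc)
    then show ?thesis using iv[OF that] by simp
  qed
  have h2: "inv_el (1 - d k) * (1 - b ^ n) = P k" if "k < n" for k
  proof -
    have "inv_el (1 - d k) * (1 - b ^ n) = (inv_el (1 - d k) * (1 - d k)) * P k"
      by (simp add: g1[of k, symmetric] mult.assoc)
    then show ?thesis using iv[OF that] by simp
  qed
  have sumP: "(\<Sum>k<n. P k) = scaleC (of_nat n) 1"
  proof -
    have "(\<Sum>k<n. P k) = (\<Sum>k<n. \<Sum>j<n. scaleC ((omg n ^ j) ^ k) (b ^ j))"
      unfolding P_def d_def scaleC_power
      by (intro sum.cong refl) (simp flip: power_mult add: mult.commute)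
    also have "\<dots> = (\<Sum>j<n. \<Sum>k<n. scaleC ((omg n ^ j) ^ k) (b ^ j))" by (rule sum.swap)
    also have "\<dots> = (\<Sum>j<n. scaleC (\<Sum>k<n. (omg n ^ j) ^ k) (b ^ j))"
      by (simp add: scaleC_sum_left')
    also have "\<dots> = (\<Sum>j<n. scaleC (if j = 0 then of_nat n else 0) (b ^ j))"
      by (intro sum.cong refl) (simp add: root_sum)
    also have "\<dots> = (\<Sum>j<n. if j = 0 then scaleC (of_nat n) 1 else 0)"
      by (intro sum.cong refl) (simp add: cv.scale_zero_left)
    also have "\<dots> = scaleC (of_nat n) 1"
      using n by (simp add: sum.delta)
    finally show ?thesis .
  qed
  let ?W = "scaleC (1 / of_nat n) ?S"
  have e1: "(1 - b ^ n) * ?S = scaleC (of_nat n) 1"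
    using h1 sumP by (simp add: sum_distrib_left)
  have e2: "?S * (1 - b ^ n) = scaleC (of_nat n) 1"
    using h2 sumP by (simp add: sum_distrib_right)
  have a1: "(1 - b ^ n) * ?W = 1" using e1 n by (simp add: mult_scaleC_right scaleC_scaleC scaleC_one)
  have a2: "?W * (1 - b ^ n) = 1" using e2 n by (simp add: mult_scaleC_left scaleC_scaleC scaleC_one)
  show ?thesis using invertible_el_I[OF a1 a2] inv_el_unique[OF a1 a2] by (simp add: d_def)
qed



lemma resolvent_cont:
  fixes a :: "'a::complex_banach_algebra_1"
  assumes inv: "\<And>\<mu>. invertible_el (1 - scaleC \<mu> a)"
  shows "continuous_on UNIV (\<lambda>\<mu>. inv_el (1 - scaleC \<mu> a))"
  unfolding continuous_on_iff
proof (intro ballI allI impI)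
  fix \<mu>0 :: complex and e :: real assume "\<mu>0 \<in> UNIV" "e > 0"
  define v where "v = inv_el (1 - scaleC \<mu>0 a)"
  define K where "K = 2 * (norm v + 1)^2 * (norm a + 1)"
  have p1: "norm v + 1 > 0" "norm a + 1 > 0" using norm_ge_zero[of v] norm_ge_zero[of a] by linarith+
  have Kp: "K > 0" unfolding K_def using p1 by simp
  have K1: "norm a * norm v \<le> K / 2"
  proof -
    have "norm a * norm v \<le> (norm a + 1) * (norm v + 1)" by (intro mult_mono) auto
    also have "\<dots> \<le> (norm a + 1) * (norm v + 1)^2"
    proof (intro mult_left_mono)
      have "(norm v + 1) * 1 \<le> (norm v + 1) * (norm v + 1)"
        by (rule mult_left_mono) (use norm_ge_zero[of v] in auto)
      then show "norm v + 1 \<le> (norm v + 1)^2" by (simp add: power2_eq_square)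
    qed simp
    finally show ?thesis unfolding K_def by (simp add: mult.commute)
  qed
  have K2: "2 * norm v ^ 2 * norm a \<le> K"
  proof -
    have "norm v ^ 2 \<le> (norm v + 1)^2" by (intro power_mono) auto
    then have "2 * norm v ^ 2 * norm a \<le> 2 * (norm v + 1)^2 * (norm a + 1)"
      by (intro mult_mono) auto
    then show ?thesis unfolding K_def .
  qed
  show "\<exists>d>0. \<forall>x'\<in>UNIV. dist x' \<mu>0 < d \<longrightarrow> dist (inv_el (1 - scaleC x' a)) (inv_el (1 - scaleC \<mu>0 a)) < e"
  proof (intro exI[of _ "min (1/K) (e/K)"] conjI ballI impI)
    show "min (1/K) (e/K) > 0" using Kp \<open>e>0\<close> by simp
    fix \<mu> assume "\<mu> \<in> UNIV" and dd: "dist \<mu> \<mu>0 < min (1/K) (e/K)"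
    let ?u = "1 - scaleC \<mu>0 a" and ?w = "1 - scaleC \<mu> a"
    have nwu: "norm (?w - ?u) = dist \<mu> \<mu>0 * norm a"
      by (simp add: norm_scaleC_diff_left dist_norm norm_minus_commute)
    have d1: "dist \<mu> \<mu>0 * K \<le> 1" using dd Kp by (simp add: field_simps)
    have d2: "dist \<mu> \<mu>0 * K < e" using dd Kp by (simp add: field_simps)
    have "norm (?w - ?u) * norm v = dist \<mu> \<mu>0 * (norm a * norm v)" unfolding nwu by (simp add: mult.assoc)
    also have "\<dots> \<le> dist \<mu> \<mu>0 * (K / 2)" by (intro mult_left_mono K1) simp
    also have "\<dots> \<le> 1/2" using d1 by simp
    finally have sm: "norm (?w - ?u) * norm (inv_el ?u) \<le> 1/2" by (simp add: v_def)
    from inv_cont[OF inv sm] have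
      "norm (inv_el ?w - inv_el ?u) \<le> 2 * norm v ^ 2 * norm (?w - ?u)" by (simp add: v_def)
    also have "\<dots> = dist \<mu> \<mu>0 * (2 * norm v ^ 2 * norm a)" unfolding nwu by (simp add: algebra_simps)
    also have "\<dots> \<le> dist \<mu> \<mu>0 * K" by (intro mult_left_mono K2) simp
    finally show "dist (inv_el ?w) (inv_el ?u) < e" using d2 by (simp add: dist_norm)
  qed
qed

lemma rickart:
  fixes a :: "'a::complex_banach_algebra_1"
  assumes inv: "\<And>\<mu>. invertible_el (1 - scaleC \<mu> a)"
  shows "(\<lambda>n. norm (a ^ n)) \<longlonglongrightarrow> 0"
proof -
  define G where "G \<mu> = inv_el (1 - scaleC \<mu> a)" for \<mu>
  have "continuous_on (cball 0 2) G"
    using continuous_on_subset[OF resolvent_cont[OF inv]] unfolding G_def by blast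
  then have "uniformly_continuous_on (cball 0 2) G"
    by (rule compact_uniformly_continuous) simp
  then obtain \<delta> where \<delta>: "\<delta> > 0"
    and dG: "\<And>x x'. x \<in> cball 0 2 \<Longrightarrow> x' \<in> cball 0 2 \<Longrightarrow> dist x' x < \<delta> \<Longrightarrow> dist (G x') (G x) < 1/4"
    unfolding uniformly_continuous_on_def by (meson zero_less_divide_1_iff zero_less_numeral)
  define Z where "Z t \<longleftrightarrow> (\<lambda>n. norm ((scaleC (complex_of_real t) a) ^ n)) \<longlonglongrightarrow> 0" for t :: real
  define E where "E u \<longleftrightarrow> eventually (\<lambda>n. norm ((scaleC (complex_of_real u) a) ^ n) \<le> 1) sequentially" for u :: real
  have Hid: "invertible_el (1 - (scaleC l a) ^ n) \<and>
      inv_el (1 - (scaleC l a) ^ n) = scaleC (1 / of_nat n) (\<Sum>k<n. G (omg n ^ k * l))"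
    if "n > 0" for n l
    using rickart_identity[OF that, of "scaleC l a"] inv by (simp add: scaleC_scaleC G_def)
  have step: "E u" if tu: "0 \<le> t" "t \<le> 2" "0 \<le> u" "u \<le> 2" "\<bar>u - t\<bar> < \<delta>" and Zt: "Z t" for t u
  proof -
    let ?t = "complex_of_real t" and ?u = "complex_of_real u"
    have ev1: "eventually (\<lambda>n. norm ((scaleC ?t a) ^ n) < 1/8) sequentially"
      using Zt unfolding Z_def by (intro order_tendstoD(2)) auto
    have ev2: "eventually (\<lambda>n. n > 0) sequentially" by (rule eventually_gt_at_top)
    show ?thesis unfolding E_def
    proof (rule eventually_mono[OF eventually_conj[OF ev1 ev2]], elim conjE)
      fix n :: nat assume nT: "norm ((scaleC ?t a) ^ n) < 1/8" and n: "n > 0"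
      let ?T = "(scaleC ?t a) ^ n" and ?U = "(scaleC ?u a) ^ n"
      have "norm ?T \<le> 1/2" using nT by simp
      from neumann_small[OF this] have "norm (inv_el (1 - ?T) - 1) \<le> 2 * norm ?T" by simp
      then have bT: "norm (inv_el (1 - ?T) - 1) \<le> 1/4" using nT by simp
      have each: "norm (G (omg n ^ k * ?u) - G (omg n ^ k * ?t)) \<le> 1/4" for k
      proof -
        have m1: "omg n ^ k * ?u \<in> cball 0 2" using tu by (simp add: norm_mult norm_omg_pow)
        have m2: "omg n ^ k * ?t \<in> cball 0 2" using tu by (simp add: norm_mult norm_omg_pow)
        have "dist (omg n ^ k * ?u) (omg n ^ k * ?t) = \<bar>u - t\<bar>"
          by (simp add: dist_norm norm_mult norm_omg_pow flip: right_diff_distrib of_real_diff)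
        then have "dist (G (omg n ^ k * ?u)) (G (omg n ^ k * ?t)) < 1/4"
          using dG[OF m2 m1] tu(5) by simp
        then show ?thesis by (simp add: dist_norm)
      qed
      have "inv_el (1 - ?U) - inv_el (1 - ?T) =
          scaleC (1 / of_nat n) (\<Sum>k<n. G (omg n ^ k * ?u) - G (omg n ^ k * ?t))"
        using Hid[OF n, of ?u] Hid[OF n, of ?t]
        by (simp add: sum_subtractf cv.scale_right_diff_distrib)
      then have "norm (inv_el (1 - ?U) - inv_el (1 - ?T)) =
          (1 / real n) * norm (\<Sum>k<n. G (omg n ^ k * ?u) - G (omg n ^ k * ?t))"
        by (simp add: norm_scaleC norm_divide)
      also have "\<dots> \<le> (1 / real n) * (\<Sum>k<n. norm (G (omg n ^ k * ?u) - G (omg n ^ k * ?t)))"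
        by (intro mult_left_mono norm_sum) simp
      also have "\<dots> \<le> (1 / real n) * (\<Sum>k<n. 1/4)"
        by (intro mult_left_mono sum_mono each) simp
      also have "\<dots> = 1/4" using n by simp
      finally have bd: "norm (inv_el (1 - ?U) - inv_el (1 - ?T)) \<le> 1/4" .
      define z where "z = 1 - inv_el (1 - ?U)"
      have "norm z \<le> norm (inv_el (1 - ?U) - inv_el (1 - ?T)) + norm (inv_el (1 - ?T) - 1)"
        unfolding z_def using norm_triangle_ineq4[of "inv_el (1 - ?U) - inv_el (1 - ?T)" "1 - inv_el (1 - ?T)"]
        by (simp add: norm_minus_commute algebra_simps)
      then have nz: "norm z \<le> 1/2" using bd bT by simp
      from neumann_small[OF nz] have bz: "norm (inv_el (1 - z) - 1) \<le> 2 * norm z" by simp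
      have iU: "invertible_el (1 - ?U)" using Hid[OF n, of ?u] by simp
      have "inv_el (1 - z) = 1 - ?U"
        unfolding z_def using inv_el[OF iU] by (simp add: inv_el_unique)
      then have "norm ?U \<le> 2 * norm z" using bz by (simp add: norm_minus_commute)
      then show "norm ?U \<le> 1" using nz by simp
    qed
  qed
  have down: "Z t" if Eu: "E u" and t: "0 \<le> t" "t < u" for t u
  proof -
    have up: "u > 0" using t by simp
    have eq: "(scaleC (complex_of_real t) a) ^ n = scaleC (complex_of_real ((t/u)^n)) ((scaleC (complex_of_real u) a) ^ n)" for n
    proof -
      have e0: "scaleC (complex_of_real t) a = scaleC (complex_of_real (t/u)) (scaleC (complex_of_real u) a)"
      proof -
        have c0: "t / u * u = t" using up by simp
        have c: "complex_of_real (t/u) * complex_of_real u = complex_of_real t" by (metis c0 of_real_mult)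
        then show ?thesis by (simp add: scaleC_scaleC)
      qed
      show ?thesis unfolding e0 by (simp only: scaleC_power of_real_power)
    qed
    have "(\<lambda>n. norm ((scaleC (complex_of_real t) a) ^ n)) \<longlonglongrightarrow> 0"
    proof (rule Lim_null_comparison)
      show "eventually (\<lambda>n. norm (norm ((scaleC (complex_of_real t) a) ^ n)) \<le> (t/u)^n) sequentially"
        using Eu unfolding E_def
      proof (rule eventually_mono)
        fix n assume h: "norm ((scaleC (complex_of_real u) a) ^ n) \<le> 1"
        have "norm (norm ((scaleC (complex_of_real t) a) ^ n)) = (t/u)^n * norm ((scaleC (complex_of_real u) a) ^ n)"
          using t up by (simp add: eq norm_scaleC norm_power norm_divide)
        also have "\<dots> \<le> (t/u)^n * 1" using h t up by (intro mult_left_mono) auto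
        finally show "norm (norm ((scaleC (complex_of_real t) a) ^ n)) \<le> (t/u)^n" by simp
      qed
      show "(\<lambda>n. (t/u)^n) \<longlonglongrightarrow> 0" using t up by (intro LIMSEQ_power_zero) simp
    qed
    then show ?thesis unfolding Z_def .
  qed
  define \<delta>' where "\<delta>' = min \<delta> 1"
  have d': "0 < \<delta>'" "\<delta>' \<le> \<delta>" "\<delta>' \<le> 1" using \<delta> by (auto simp: \<delta>'_def)
  have ind: "real m * \<delta>' / 2 \<le> 3/2 \<longrightarrow> Z (real m * \<delta>' / 2)" for m
  proof (induction m)
    case 0
    have "(\<lambda>n. norm ((0::'a) ^ Suc n)) \<longlonglongrightarrow> 0" by simp
    then have "(\<lambda>n. norm ((0::'a) ^ n)) \<longlonglongrightarrow> 0" by (rule LIMSEQ_imp_Suc)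
    then show ?case by (simp add: Z_def cv.scale_zero_left)
  next
    case (Suc m)
    show ?case
    proof
      assume h: "real (Suc m) * \<delta>' / 2 \<le> 3/2"
      let ?t = "real m * \<delta>' / 2"
      have "?t \<le> 3/2" using h d' by (simp add: field_simps)
      then have Zt: "Z ?t" using Suc by simp
      have "E (?t + 3 * \<delta>' / 4)"
        by (rule step[OF _ _ _ _ _ Zt]) (use h d' in \<open>auto simp: field_simps\<close>)
      then show "Z (real (Suc m) * \<delta>' / 2)"
        by (rule down) (use d' in \<open>auto simp: field_simps\<close>)
    qed
  qed
  define m where "m = nat \<lceil>2 / \<delta>'\<rceil>"
  have m1: "real m \<ge> 2 / \<delta>'" unfolding m_def by linarith
  have m2: "real m < 2 / \<delta>' + 1"
  proof -
    have "0 < 2 / \<delta>'" using d' by simp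
    then have "real m = of_int \<lceil>2 / \<delta>'\<rceil>" unfolding m_def by simp
    then show ?thesis using ceiling_correct[of "2 / \<delta>'"] by linarith
  qed
  define s where "s = real m * \<delta>' / 2"
  have s1: "s \<ge> 1" using m1 d' by (simp add: s_def field_simps)
  have s2: "s \<le> 3/2"
  proof -
    have "real m * \<delta>' < (2 / \<delta>' + 1) * \<delta>'" using m2 d' by (intro mult_strict_right_mono) auto
    also have "\<dots> = 2 + \<delta>'" using d' by (simp add: field_simps)
    finally show ?thesis using d' by (simp add: s_def)
  qed
  have Zs: "Z s" using ind s2 by (simp add: s_def)
  show ?thesis
  proof (rule Lim_null_comparison)
    show "(\<lambda>n. norm ((scaleC (complex_of_real s) a) ^ n)) \<longlonglongrightarrow> 0" using Zs unfolding Z_def .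
    show "eventually (\<lambda>n. norm (norm (a ^ n)) \<le> norm ((scaleC (complex_of_real s) a) ^ n)) sequentially"
    proof (rule always_eventually, rule allI)
      fix n
      have "a ^ n = scaleC (complex_of_real ((1/s)^n)) ((scaleC (complex_of_real s) a) ^ n)"
      proof -
        have "complex_of_real ((1 / s) ^ n) * complex_of_real (s ^ n) = complex_of_real (((1/s) * s) ^ n)"
          by (simp only: of_real_mult power_mult_distrib)
        also have "\<dots> = 1" using s1 by simp
        finally have c: "complex_of_real ((1 / s) ^ n) * complex_of_real (s ^ n) = 1" .
        show ?thesis by (simp add: scaleC_power scaleC_scaleC c scaleC_one flip: of_real_power)
      qed
      then have "norm (a ^ n) = (1/s)^n * norm ((scaleC (complex_of_real s) a) ^ n)"
        using s1 by (simp add: norm_scaleC norm_power norm_divide)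
      also have "\<dots> \<le> 1 * norm ((scaleC (complex_of_real s) a) ^ n)"
        using s1 by (intro mult_right_mono) (auto simp: power_le_one)
      finally show "norm (norm (a ^ n)) \<le> norm ((scaleC (complex_of_real s) a) ^ n)" by simp
    qed
  qed
qed



lemma quasinil_summable:
  fixes a :: "'a::complex_banach_algebra_1"
  assumes a: "a \<in> quasinilpotents" and K: "K \<ge> 0"
  shows "summable (\<lambda>n. K ^ n * norm (a ^ n))"
proof -
  define a' where "a' = scaleC (complex_of_real (2 * K + 1)) a"
  have "invertible_el (1 - scaleC \<mu> a')" for \<mu>
    using quasinil_shift[OF a, of "\<mu> * complex_of_real (2 * K + 1)"] by (simp add: a'_def scaleC_scaleC)
  then have "(\<lambda>n. norm (a' ^ n)) \<longlonglongrightarrow> 0" by (rule rickart)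
  then have ev: "eventually (\<lambda>n. norm (a' ^ n) < 1) sequentially" by (intro order_tendstoD(2)) auto
  show ?thesis
  proof (rule summable_comparison_test_ev)
    show "summable (\<lambda>n. (1/2::real) ^ n)" by (rule summable_geometric) simp
    show "eventually (\<lambda>n. norm (K ^ n * norm (a ^ n)) \<le> (1/2) ^ n) sequentially"
      using ev
    proof (rule eventually_mono)
      fix n assume h: "norm (a' ^ n) < 1"
      have na: "norm (a' ^ n) = (2 * K + 1) ^ n * norm (a ^ n)"
      proof -
        have cm: "cmod (complex_of_real (2 * K + 1)) = 2 * K + 1" using K by (simp only: norm_of_real)
        show ?thesis by (simp only: a'_def scaleC_power norm_scaleC norm_power cm)
      qed
      have "norm (K ^ n * norm (a ^ n)) = K ^ n * norm (a ^ n)" using K by simp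
      also have "\<dots> = (K / (2 * K + 1)) ^ n * norm (a' ^ n)"
        using K by (simp add: na power_divide)
      also have "\<dots> \<le> (1/2) ^ n * 1"
        using h K by (intro mult_mono power_mono) (auto simp: field_simps)
      finally show "norm (K ^ n * norm (a ^ n)) \<le> (1/2) ^ n" by simp
    qed
  qed
qed

lemma comm_rad_quasinil:
  assumes comm: "\<And>a b::'a::complex_banach_algebra_1. a * b - b * a \<in> jacobson_radical"
  shows "(quasinilpotents :: 'a set) \<subseteq> jacobson_radical"
proof
  fix a :: 'a assume a: "a \<in> quasinilpotents"
  show "a \<in> jacobson_radical"
    unfolding rad_char
  proof
    fix b :: 'a
    define s where "s n = b ^ n * a ^ n" for n
    have sb: "norm (s n) \<le> norm b ^ n * norm (a ^ n)" for n
      unfolding s_def using norm_mult_ineq[of "b ^ n" "a ^ n"] norm_power_ineq[of b n]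
      by (meson mult_right_mono norm_ge_zero order_trans)
    have "summable (\<lambda>n. norm b ^ n * norm (a ^ n))" by (rule quasinil_summable[OF a]) simp
    then have "summable (\<lambda>n. norm (s n))"
      by (rule summable_comparison_test[rotated]) (auto simp: sb)
    then have ss: "summable s" by (rule summable_norm_cancel)
    define c where "c = suminf s"
    define S where "S N = (\<Sum>n<N. s n)" for N
    have Sc: "S \<longlonglongrightarrow> c" unfolding S_def c_def using ss by (simp add: summable_LIMSEQ)
    have tm: "s (Suc n) - s n * (b * a) \<in> jacobson_radical" for n
    proof -
      have eq: "s (Suc n) - s n * (b * a) =
          b ^ n * ((b * a ^ Suc n - a ^ Suc n * b) + a ^ n * (a * b - b * a))"
        unfolding s_def by (simp add: algebra_simps power_Suc2 del: power_Suc)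
      show ?thesis unfolding eq
        by (intro rad_mult_left rad_add comm)
    qed
    have inR: "S (Suc N) - 1 - S N * (b * a) \<in> jacobson_radical" for N
    proof -
      have "S (Suc N) = s 0 + (\<Sum>n<N. s (Suc n))" unfolding S_def by (rule sum.lessThan_Suc_shift)
      moreover have "s 0 = 1" by (simp add: s_def)
      ultimately have "S (Suc N) - 1 - S N * (b * a) = (\<Sum>n<N. s (Suc n) - s n * (b * a))"
        by (simp add: S_def sum_subtractf sum_distrib_right)
      then show ?thesis using tm by (simp add: rad_sum)
    qed
    have lim: "(\<lambda>N. S (Suc N) - 1 - S N * (b * a)) \<longlonglongrightarrow> c - 1 - c * (b * a)"
      by (intro tendsto_diff tendsto_mult tendsto_const Sc LIMSEQ_Suc[OF Sc])
    have r: "c - 1 - c * (b * a) \<in> jacobson_radical"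
    proof -
      have "\<forall>x l. (\<forall>n. x n \<in> jacobson_radical) \<and> x \<longlonglongrightarrow> l \<longrightarrow> l \<in> (jacobson_radical :: 'a set)"
        using rad_closed[where 'a='a] unfolding closed_sequential_limits .
      from this[rule_format, of "\<lambda>N. S (Suc N) - 1 - S N * (b * a)" "c - 1 - c * (b * a)"]
      show ?thesis using inR lim by blast
    qed
    let ?r = "c - 1 - c * (b * a)"
    have iv: "invertible_el (1 - (- ?r))" using rad_inv[OF rad_uminus[OF r]] .
    have e: "1 - (- ?r) = c * (1 - b * a)" by (simp add: algebra_simps)
    show "\<exists>u. u * (1 - b * a) = 1"
    proof (intro exI[of _ "inv_el (1 - (- ?r)) * c"])
      have "inv_el (1 - (- ?r)) * c * (1 - b * a) = inv_el (1 - (- ?r)) * (1 - (- ?r))"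
        by (simp only: e mult.assoc)
      then show "inv_el (1 - (- ?r)) * c * (1 - b * a) = 1" using inv_el[OF iv] by simp
    qed
  qed
qed



section \<open>The q-plane relations\<close>

lemma yx_rel:
  assumes q: "q \<noteq> 0" and r: "x * y = scaleC (inverse q) (y * x)"
  shows "y * x = scaleC q ((x::'a::complex_banach_algebra_1) * y)"
  using q by (simp add: r scaleC_scaleC scaleC_one)

lemma ypow_x:
  assumes yx: "y * x = scaleC q ((x::'a::complex_banach_algebra_1) * y)"
  shows "y ^ n * x = scaleC (q ^ n) (x * y ^ n)"
proof (induction n)
  case 0 then show ?case by (simp add: scaleC_one)
next
  case (Suc n)
  have "y ^ Suc n * x = y ^ n * (y * x)" by (simp add: power_Suc2 mult.assoc del: power_Suc)
  also have "\<dots> = scaleC q (y ^ n * x * y)" by (simp add: yx mult_scaleC_right mult.assoc)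
  also have "\<dots> = scaleC (q ^ Suc n) (x * y ^ Suc n)"
    by (simp add: Suc mult_scaleC_left scaleC_scaleC mult.assoc power_Suc2 mult.commute del: power_Suc)
  finally show ?case .
qed

lemma xy_pow:
  assumes yx: "y * x = scaleC q ((x::'a::complex_banach_algebra_1) * y)"
  shows "(x * y) ^ n = scaleC (q ^ (\<Sum>i<n. i)) (x ^ n * y ^ n)"
proof (induction n)
  case 0 then show ?case by (simp add: scaleC_one)
next
  case (Suc n)
  have "(x * y) ^ Suc n = (x * y) ^ n * (x * y)" by (simp add: power_Suc2 del: power_Suc)
  also have "\<dots> = scaleC (q ^ (\<Sum>i<n. i)) (x ^ n * (y ^ n * x) * y)"
    by (simp add: Suc mult_scaleC_left mult.assoc)
  also have "\<dots> = scaleC (q ^ (\<Sum>i<n. i) * q ^ n) (x ^ n * x * (y ^ n * y))"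
    by (simp add: ypow_x[OF yx] mult_scaleC_left mult_scaleC_right scaleC_scaleC mult.assoc)
  also have "\<dots> = scaleC (q ^ (\<Sum>i<Suc n. i)) (x ^ Suc n * y ^ Suc n)"
    by (simp add: power_Suc2 power_add del: power_Suc)
  finally show ?case .
qed

lemma xy_summable:
  assumes yx: "y * x = scaleC q ((x::'a::complex_banach_algebra_1) * y)" and q1: "cmod q < 1"
  shows "summable (\<lambda>n. norm ((scaleC w (x * y)) ^ n))"
proof -
  define C where "C = cmod w * norm x * norm y"
  define f where "f n = C ^ n * cmod q ^ (\<Sum>i<n. i)" for n
  have C0: "C \<ge> 0" by (simp add: C_def)
  have f0: "f n \<ge> 0" for n using C0 by (simp add: f_def)
  have bound: "norm ((scaleC w (x * y)) ^ n) \<le> f n" for n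
  proof -
    have "norm ((scaleC w (x * y)) ^ n) = cmod (w ^ n * q ^ (\<Sum>i<n. i)) * norm (x ^ n * y ^ n)"
      by (simp add: scaleC_power xy_pow[OF yx] scaleC_scaleC norm_scaleC)
    also have "\<dots> = (cmod w ^ n * cmod q ^ (\<Sum>i<n. i)) * norm (x ^ n * y ^ n)"
      by (simp add: norm_mult norm_power)
    also have "\<dots> \<le> (cmod w ^ n * cmod q ^ (\<Sum>i<n. i)) * (norm x ^ n * norm y ^ n)"
    proof (rule mult_left_mono)
      show "norm (x ^ n * y ^ n) \<le> norm x ^ n * norm y ^ n"
        using norm_mult_ineq[of "x ^ n" "y ^ n"] norm_power_ineq[of x n] norm_power_ineq[of y n]
        by (meson mult_mono norm_ge_zero order_trans)
    qed simp
    also have "\<dots> = f n" by (simp add: f_def C_def power_mult_distrib)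
    finally show ?thesis .
  qed
  have "(\<lambda>n. C * cmod q ^ n) \<longlonglongrightarrow> C * 0"
    by (intro tendsto_mult tendsto_const LIMSEQ_power_zero) (simp add: q1)
  then have "eventually (\<lambda>n. C * cmod q ^ n < 1/2) sequentially"
    by (intro order_tendstoD(2)) auto
  then obtain N where N: "\<And>n. n \<ge> N \<Longrightarrow> C * cmod q ^ n < 1/2"
    unfolding eventually_sequentially by blast
  have "summable f"
  proof (rule summable_ratio_test[of "1/2" N])
    fix n assume "n \<ge> N"
    have "f (Suc n) = (C * cmod q ^ n) * f n" by (simp add: f_def power_add)
    also have "\<dots> \<le> 1/2 * f n" using N[OF \<open>n \<ge> N\<close>] f0[of n] by (intro mult_right_mono) auto
    finally show "norm (f (Suc n)) \<le> 1/2 * norm (f n)" using f0[of n] f0[of "Suc n"] by simp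
  qed simp
  then show ?thesis by (rule summable_comparison_test[rotated]) (auto simp: bound)
qed

lemma xy_quasinil:
  assumes yx: "y * x = scaleC q ((x::'a::complex_banach_algebra_1) * y)" and q1: "cmod q < 1"
  shows "x * y \<in> quasinilpotents"
proof (rule invertible_from_shift)
  fix \<mu> show "invertible_el (1 - scaleC \<mu> (x * y))" using neumann[OF xy_summable[OF yx q1]] by simp
next
  show "\<not> invertible_el (x * y)"
  proof
    assume "invertible_el (x * y)"
    then obtain v where v: "x * y * v = 1" "v * (x * y) = 1" unfolding invertible_el_def by blast
    have pw: "(x * y) ^ n * v ^ n = 1" for n
    proof (induction n)
      case 0 then show ?case by simp
    next
      case (Suc n)
      have "(x * y) ^ Suc n * v ^ Suc n = (x * y) ^ n * ((x * y) * v) * v ^ n"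
        unfolding power_Suc2[of "x*y" n] power_Suc[of v n] by (simp only: mult.assoc)
      then show ?case using Suc v by simp
    qed
    let ?w = "complex_of_real (norm v)"
    have "(\<lambda>n. norm ((scaleC ?w (x * y)) ^ n)) \<longlonglongrightarrow> 0"
      using summable_LIMSEQ_zero[OF xy_summable[OF yx q1, of ?w]] by (simp add: tendsto_norm_zero_iff)
    then have "eventually (\<lambda>n. norm ((scaleC ?w (x * y)) ^ n) < 1) sequentially"
      by (intro order_tendstoD(2)) auto
    then obtain n where n: "norm ((scaleC ?w (x * y)) ^ n) < 1" by (meson eventually_sequentially order_refl)
    have "1 = norm ((x * y) ^ n * v ^ n)" using pw by simp
    also have "\<dots> \<le> norm ((x * y) ^ n) * norm v ^ n"
      using norm_mult_ineq[of "(x*y)^n" "v ^ n"] norm_power_ineq[of v n]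
      by (meson mult_left_mono norm_ge_zero order_trans)
    also have "\<dots> = norm ((scaleC ?w (x * y)) ^ n)"
      by (simp add: scaleC_power norm_scaleC norm_power mult.commute)
    finally show False using n by simp
  qed
qed

section \<open>Commutators of the generated subalgebra\<close>

lemma ig_scale: "a \<in> ideal_gen S z \<Longrightarrow> scaleC c a \<in> ideal_gen S z" by (rule ideal_gen.scale)
lemma ig_uminus: "a \<in> ideal_gen S z \<Longrightarrow> - a \<in> ideal_gen S z"
  using ideal_gen.scale[of a S z "-1"] by (simp add: cv.scale_minus_left scaleC_one)
lemma ig_diff: "a \<in> ideal_gen S z \<Longrightarrow> b \<in> ideal_gen S z \<Longrightarrow> a - b \<in> ideal_gen S z"
  using ideal_gen.add ig_uminus by (metis diff_conv_add_uminus)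

lemma comm_gen:
  assumes yx: "y * x = scaleC q ((x::'a::complex_banach_algebra_1) * y)"
    and a: "a \<in> subalg_gen x y" and g: "g = x \<or> g = y"
  shows "a * g - g * a \<in> ideal_gen (subalg_gen x y) (x * y)"
  using a
proof (induction rule: subalg_gen.induct)
  case one then show ?case by (simp add: ideal_gen.zero)
next
  have c: "x * y - y * x \<in> ideal_gen (subalg_gen x y) (x * y)"
  proof -
    have "x * y - y * x = scaleC (1 - q) (x * y)"
      by (simp add: yx scaleC_diff_left[symmetric] scaleC_one)
    then show ?thesis by (simp add: ideal_gen.scale ideal_gen.gen)
  qed
  {
    case gen_x then show ?case using g c by (auto simp: ideal_gen.zero)
  next
    case gen_y then show ?case using g ig_uminus[OF c] by (auto simp: ideal_gen.zero)
  }
next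
  case (add a b)
  have "(a + b) * g - g * (a + b) = (a * g - g * a) + (b * g - g * b)" by (simp add: algebra_simps)
  then show ?case using add by (simp add: ideal_gen.add)
next
  case (scale a c)
  have "scaleC c a * g - g * scaleC c a = scaleC c (a * g - g * a)"
    by (simp add: mult_scaleC_left mult_scaleC_right cv.scale_right_diff_distrib)
  then show ?case using scale by (simp add: ideal_gen.scale)
next
  case (mult a b)
  have "a * b * g - g * (a * b) = a * (b * g - g * b) + (a * g - g * a) * b" by (simp add: algebra_simps)
  then show ?case using mult by (simp add: ideal_gen.add ideal_gen.mult_left ideal_gen.mult_right)
qed

lemma comm_all:
  assumes yx: "y * x = scaleC q ((x::'a::complex_banach_algebra_1) * y)"
    and a: "a \<in> subalg_gen x y" and b: "b \<in> subalg_gen x y"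
  shows "a * b - b * a \<in> ideal_gen (subalg_gen x y) (x * y)"
  using b
proof (induction rule: subalg_gen.induct)
  case one then show ?case by (simp add: ideal_gen.zero)
next
  case gen_x then show ?case using comm_gen[OF yx a] by simp
next
  case gen_y then show ?case using comm_gen[OF yx a] by simp
next
  case (add b c)
  have "a * (b + c) - (b + c) * a = (a * b - b * a) + (a * c - c * a)" by (simp add: algebra_simps)
  then show ?case using add by (simp add: ideal_gen.add)
next
  case (scale b c)
  have "a * scaleC c b - scaleC c b * a = scaleC c (a * b - b * a)"
    by (simp add: mult_scaleC_left mult_scaleC_right cv.scale_right_diff_distrib)
  then show ?case using scale by (simp add: ideal_gen.scale)
next
  case (mult b c)
  have "a * (b * c) - b * c * a = (a * b - b * a) * c + b * (a * c - c * a)" by (simp add: algebra_simps)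
  then show ?case using mult by (simp add: ideal_gen.add ideal_gen.mult_left ideal_gen.mult_right)
qed

lemma dense_ext:
  fixes f :: "'a::complex_banach_algebra_1 \<Rightarrow> 'b::complex_banach_algebra_1"
  assumes "closure S = UNIV" "closed C" "\<And>z. isCont f z" "\<And>s. s \<in> S \<Longrightarrow> f s \<in> C"
  shows "f z \<in> C"
proof -
  have "closed (f -` C)" using continuous_closed_vimage assms(2,3) by blast
  moreover have "S \<subseteq> f -` C" using assms(4) by blast
  ultimately have "closure S \<subseteq> f -` C" by (rule closure_minimal[rotated])
  then show ?thesis using assms(1) by blast
qed



theorem proposition3p1:
  fixes q :: complex and x y :: "'a::complex_banach_algebra_1"
  assumes "0 < cmod q" and "cmod q < 1"
    and "banach_q_plane q x y"
  shows "(I_xy x y \<subseteq> jacobson_radical \<longleftrightarrow> jacobson_radical = (quasinilpotents :: 'a set))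
    \<and> (jacobson_radical = (quasinilpotents :: 'a set) \<longleftrightarrow>
         (\<forall>a b::'a. a * b - b * a \<in> jacobson_radical))"
proof -
  have q0: "q \<noteq> 0" using assms(1) by auto
  have rel: "x * y = scaleC (inverse q) (y * x)" and dense: "closure (subalg_gen x y) = UNIV"
    using assms(3) unfolding banach_q_plane_def by auto
  have yx: "y * x = scaleC q (x * y)" by (rule yx_rel[OF q0 rel])
  have xyQ: "x * y \<in> quasinilpotents" by (rule xy_quasinil[OF yx assms(2)])
  have ii_i: "I_xy x y \<subseteq> jacobson_radical" if RQ: "jacobson_radical = (quasinilpotents :: 'a set)"
  proof -
    have "a \<in> jacobson_radical" if "(a::'a) \<in> ideal_gen (subalg_gen x y) (x * y)" for a
      using that
    proof (induction rule: ideal_gen.induct)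
      case gen then show ?case using xyQ RQ by simp
    next
      case zero then show ?case by (rule rad_0)
    next
      case (add a b) then show ?case by (simp add: rad_add)
    next
      case (scale a c) then show ?case by (simp add: rad_scale)
    next
      case (mult_left s a) then show ?case by (simp add: rad_mult_left)
    next
      case (mult_right s a) then show ?case by (simp add: rad_mult_right)
    qed
    then have "ideal_gen (subalg_gen x y) (x * y) \<subseteq> jacobson_radical" by blast
    then show ?thesis unfolding I_xy_def by (rule closure_minimal[OF _ rad_closed])
  qed
  have i_iii: "\<forall>a b::'a. a * b - b * a \<in> jacobson_radical" if I: "I_xy x y \<subseteq> jacobson_radical"
  proof -
    have s1: "a * b - b * a \<in> jacobson_radical" if a: "a \<in> subalg_gen x y" for a b
    proof (rule dense_ext[OF dense rad_closed, of "\<lambda>b. a * b - b * a"])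
      show "isCont (\<lambda>b. a * b - b * a) z" for z by (intro continuous_intros)
      fix s assume "s \<in> subalg_gen x y"
      then have "a * s - s * a \<in> ideal_gen (subalg_gen x y) (x * y)" by (rule comm_all[OF yx a])
      then show "a * s - s * a \<in> jacobson_radical" using I closure_subset unfolding I_xy_def by blast
    qed
    have "a * b - b * a \<in> jacobson_radical" for a b :: 'a
    proof (rule dense_ext[OF dense rad_closed, of "\<lambda>a. a * b - b * a"])
      show "isCont (\<lambda>a. a * b - b * a) z" for z by (intro continuous_intros)
      fix s assume "s \<in> subalg_gen x y"
      then show "s * b - b * s \<in> jacobson_radical" by (rule s1)
    qed
    then show ?thesis by blast
  qed
  have iii_ii: "jacobson_radical = (quasinilpotents :: 'a set)"
    if C: "\<forall>a b::'a. a * b - b * a \<in> jacobson_radical"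
    using comm_rad_quasinil[of] C rad_sub_quasinil by blast
  show ?thesis using ii_i i_iii iii_ii by blast
qed

end
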